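(* Let $G$ be a connected graph, let $\sigma$ be a BFS ordering of $G$ with $\mathcal{F}$-tree $T_\sigma$, and let $S$ be the set of the first $k$ internal vertices of $T_\sigma$ (with respect to the order $\sigma$). Let $\rho'$ be the ordering of $S$ induced by $\sigma$, let $\rho$ be any ordering of $V(G)$ that starts with $\rho'$, let $\tau$ be the $\mathrm{BFS}^+_\rho$ ordering of $G$, and let $T_\tau$ be the $\mathcal{F}$-tree of $\tau$. Then every $v\in S$ has the same set of children in $T_\sigma$ as in $T_\tau$.
   Context: All graphs are finite, simple, undirected, connected and non-empty. A BFS ordering is produced by breadth-first search with a queue: choose a start vertex, mark it visited and enqueue it; repeatedly dequeue the front vertex $v$ and enqueue all unvisited neighbors of $v$ in some order, marking them visited; the ordering is the visiting order. Given a linear ordering $\rho$ of $V(G)$, the $\mathrm{BFS}^+_\rho$ ordering is the BFS ordering in which every tie is broken by $\rho$: the start vertex is the first vertex of $\rho$, and whenever the unvisited neighbors of a dequeued vertex are enqueued, they are enqueued in the order in which they appear in $\rho$. The $\mathcal{F}$-tree of an ordering $(v_1,\dots,v_n)$ is the spanning tree rooted at $v_1$ in which the parent of $v_i$ ($i>1$) is its leftmost neighbor in the ordering. A leaf is a non-root vertex without children; all other vertices, including the root, are internal. *)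

theory Defs
  imports Main "HOL-Library.Sublist"
begin

definition simple_graph :: "'a set \<Rightarrow> ('a \<Rightarrow> 'a \<Rightarrow> bool) \<Rightarrow> bool" where
  "simple_graph V E \<longleftrightarrow> finite V \<and> V \<noteq> {} \<and>
     (\<forall>u v. E u v \<longrightarrow> u \<in> V \<and> v \<in> V) \<and>
     (\<forall>u v. E u v \<longrightarrow> E v u) \<and> (\<forall>u. \<not> E u u)"

definition connected_graph :: "'a set \<Rightarrow> ('a \<Rightarrow> 'a \<Rightarrow> bool) \<Rightarrow> bool" where
  "connected_graph V E \<longleftrightarrow> simple_graph V E \<and> (\<forall>u\<in>V. \<forall>v\<in>V. E\<^sup>*\<^sup>* u v)"

definition linear_ordering :: "'a set \<Rightarrow> 'a list \<Rightarrow> bool" where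
  "linear_ordering V xs \<longleftrightarrow> distinct xs \<and> set xs = V"

inductive bfs_reach :: "('a \<Rightarrow> 'a \<Rightarrow> bool) \<Rightarrow> 'a \<Rightarrow> 'a list \<Rightarrow> 'a list \<Rightarrow> bool"
  for E :: "'a \<Rightarrow> 'a \<Rightarrow> bool" and s :: 'a where
  start: "bfs_reach E s [s] [s]"
| step: "bfs_reach E s vis (v # q) \<Longrightarrow> distinct ns \<Longrightarrow>
         set ns = {u. E v u \<and> u \<notin> set vis} \<Longrightarrow> bfs_reach E s (vis @ ns) (q @ ns)"

definition bfs_ordering :: "'a set \<Rightarrow> ('a \<Rightarrow> 'a \<Rightarrow> bool) \<Rightarrow> 'a list \<Rightarrow> bool" where
  "bfs_ordering V E \<sigma> \<longleftrightarrow> (\<exists>s\<in>V. bfs_reach E s \<sigma> [])"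

inductive bfsp_reach :: "('a \<Rightarrow> 'a \<Rightarrow> bool) \<Rightarrow> 'a list \<Rightarrow> 'a list \<Rightarrow> 'a list \<Rightarrow> bool"
  for E :: "'a \<Rightarrow> 'a \<Rightarrow> bool" and \<rho> :: "'a list" where
  start: "bfsp_reach E \<rho> [hd \<rho>] [hd \<rho>]"
| step: "bfsp_reach E \<rho> vis (v # q) \<Longrightarrow>
         bfsp_reach E \<rho> (vis @ filter (\<lambda>u. E v u \<and> u \<notin> set vis) \<rho>)
                         (q @ filter (\<lambda>u. E v u \<and> u \<notin> set vis) \<rho>)"

definition bfs_plus_ordering :: "('a \<Rightarrow> 'a \<Rightarrow> bool) \<Rightarrow> 'a list \<Rightarrow> 'a list \<Rightarrow> bool" where
  "bfs_plus_ordering E \<rho> \<tau> \<longleftrightarrow> bfsp_reach E \<rho> \<tau> []"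

definition ftree_parent :: "('a \<Rightarrow> 'a \<Rightarrow> bool) \<Rightarrow> 'a list \<Rightarrow> 'a \<Rightarrow> 'a" where
  "ftree_parent E \<sigma> v = hd (filter (E v) \<sigma>)"

definition ftree_children :: "('a \<Rightarrow> 'a \<Rightarrow> bool) \<Rightarrow> 'a list \<Rightarrow> 'a \<Rightarrow> 'a set" where
  "ftree_children E \<sigma> u = {v \<in> set \<sigma>. v \<noteq> hd \<sigma> \<and> ftree_parent E \<sigma> v = u}"

definition ftree_internal :: "('a \<Rightarrow> 'a \<Rightarrow> bool) \<Rightarrow> 'a list \<Rightarrow> 'a \<Rightarrow> bool" where
  "ftree_internal E \<sigma> u \<longleftrightarrow> u \<in> set \<sigma> \<and> (u = hd \<sigma> \<or> ftree_children E \<sigma> u \<noteq> {})"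

definition first_internal :: "('a \<Rightarrow> 'a \<Rightarrow> bool) \<Rightarrow> 'a list \<Rightarrow> nat \<Rightarrow> 'a list" where
  "first_internal E \<sigma> k = take k (filter (ftree_internal E \<sigma>) \<sigma>)"

end

theory Submission
  imports Defs
begin

fun idx :: "'a list \<Rightarrow> 'a \<Rightarrow> nat" where
  "idx [] x = 0"
| "idx (a # L) x = (if a = x then 0 else Suc (idx L x))"

lemma idx_lt: "x \<in> set L \<Longrightarrow> idx L x < length L"
  by (induction L) auto

lemma nth_idx: "x \<in> set L \<Longrightarrow> L ! idx L x = x"
  by (induction L) auto

lemma idx_inj: "x \<in> set L \<Longrightarrow> y \<in> set L \<Longrightarrow> idx L x = idx L y \<Longrightarrow> x = y"
  by (metis nth_idx)

lemma idx_append1: "x \<in> set A \<Longrightarrow> idx (A @ B) x = idx A x"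
  by (induction A) auto

lemma idx_append2: "x \<notin> set A \<Longrightarrow> idx (A @ B) x = length A + idx B x"
  by (induction A) auto

lemma idx_filter_mono:
  "x \<in> set (filter P L) \<Longrightarrow> y \<in> set (filter P L) \<Longrightarrow>
   idx (filter P L) x < idx (filter P L) y \<Longrightarrow> idx L x < idx L y"
  by (induction L) (auto split: if_splits)

lemma idx_take: "x \<in> set (take k L) \<Longrightarrow> idx (take k L) x = idx L x"
  by (induction L arbitrary: k) (auto simp: take_Cons split: nat.splits if_splits)

lemma hd_filter_min:
  "z \<in> set L \<Longrightarrow> P z \<Longrightarrow> idx L (hd (filter P L)) \<le> idx L z"
  by (induction L) auto

lemma hd_filter_props:
  "z \<in> set L \<Longrightarrow> P z \<Longrightarrow> hd (filter P L) \<in> set L \<and> P (hd (filter P L))"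
proof -
  assume "z \<in> set L" "P z"
  then have "filter P L \<noteq> []" by (auto simp: filter_empty_conv)
  then have "hd (filter P L) \<in> set (filter P L)" by (rule hd_in_set)
  then show ?thesis by simp
qed

lemma hd_filter_append:
  "z \<in> set A \<Longrightarrow> P z \<Longrightarrow> hd (filter P (A @ B)) = hd (filter P A)"
proof -
  assume "z \<in> set A" "P z"
  then have "filter P A \<noteq> []" by (auto simp: filter_empty_conv)
  then show ?thesis by simp
qed

lemma idx_in_prefix: "x \<in> set (A @ B) \<Longrightarrow> idx (A @ B) x < length A \<Longrightarrow> x \<in> set A"
  using idx_append2 by fastforce

abbreviation par :: "('a \<Rightarrow> 'a \<Rightarrow> bool) \<Rightarrow> 'a list \<Rightarrow> 'a \<Rightarrow> 'a" where
  "par E L w \<equiv> hd (filter (E w) L)"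

definition inv :: "('a \<Rightarrow> 'a \<Rightarrow> bool) \<Rightarrow> 'a \<Rightarrow> 'a list \<Rightarrow> 'a list \<Rightarrow> bool" where
  "inv E s vis q \<longleftrightarrow> (\<exists>d. vis = d @ q \<and> distinct vis \<and> vis \<noteq> [] \<and> hd vis = s \<and>
     (\<forall>v\<in>set d. \<forall>u. E v u \<longrightarrow> u \<in> set vis) \<and>
     (\<forall>w\<in>set vis. w \<noteq> s \<longrightarrow> (\<exists>z\<in>set vis. E w z) \<and> par E vis w \<in> set d \<and>
          idx vis (par E vis w) < idx vis w) \<and>
     (\<forall>x\<in>set vis. \<forall>y\<in>set vis. x \<noteq> s \<longrightarrow> y \<noteq> s \<longrightarrow> idx vis x < idx vis y \<longrightarrow>
          idx vis (par E vis x) \<le> idx vis (par E vis y)))"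

lemma inv_start: "inv E s [s] [s]"
  unfolding inv_def by (rule exI[of _ "[]"]) auto

lemma inv_step:
  assumes I: "inv E s vis (v # q)" and dn: "distinct ns"
    and ns: "set ns = {u. E v u \<and> u \<notin> set vis}" and sym: "\<And>a b. E a b \<Longrightarrow> E b a"
  shows "inv E s (vis @ ns) (q @ ns) \<and> (\<forall>w\<in>set ns. par E (vis @ ns) w = v)
     \<and> (\<exists>d. vis = d @ v # q \<and> (\<forall>w\<in>set vis. w \<noteq> s \<longrightarrow> par E vis w \<in> set d))"
proof -
  obtain d where vd: "vis = d @ v # q" and dv: "distinct vis" and ne: "vis \<noteq> []" and hs: "hd vis = s"
    and cl: "\<forall>v\<in>set d. \<forall>u. E v u \<longrightarrow> u \<in> set vis"
    and pa: "\<forall>w\<in>set vis. w \<noteq> s \<longrightarrow> (\<exists>z\<in>set vis. E w z) \<and> par E vis w \<in> set d \<and>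
          idx vis (par E vis w) < idx vis w"
    and mo: "\<forall>x\<in>set vis. \<forall>y\<in>set vis. x \<noteq> s \<longrightarrow> y \<noteq> s \<longrightarrow> idx vis x < idx vis y \<longrightarrow>
          idx vis (par E vis x) \<le> idx vis (par E vis y)"
    using I unfolding inv_def by blast
  let ?V = "vis @ ns"
  have sV: "s \<in> set vis" using ne hs by (metis list.set_sel(1))
  have dV: "distinct ?V" using dv dn ns by auto
  have old_par: "par E ?V w = par E vis w" if "w \<in> set vis" "w \<noteq> s" for w
    using pa that hd_filter_append by metis
  have old_idx: "idx ?V x = idx vis x" if "x \<in> set vis" for x
    using idx_append1 that by metis
  have new_par: "par E ?V w = v" if w: "w \<in> set ns" for w
  proof -
    have "filter (E w) d = []"
    proof (rule ccontr)
      assume "filter (E w) d \<noteq> []"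
      then obtain z where "z \<in> set d" "E w z" by (auto simp: filter_empty_conv)
      then have "w \<in> set vis" using cl sym by blast
      then show False using w ns by auto
    qed
    moreover have "E w v" using w ns sym by auto
    ultimately show ?thesis using vd by simp
  qed
  have vnd: "v \<notin> set d" using dv vd by auto
  have idxv: "idx vis z < idx vis v" if "z \<in> set d" for z
    using vd that vnd idx_append1[of z d "v # q"] idx_append2[of v d "v # q"] idx_lt[of z d] by simp
  have newlater: "idx ?V x < idx ?V y" if "x \<in> set vis" "y \<in> set ns" for x y
  proof -
    have "y \<notin> set vis" using that ns by auto
    then show ?thesis using that idx_append1[of x vis ns] idx_append2[of y vis ns] idx_lt[of x vis] by simp
  qed
  have "inv E s ?V (q @ ns)"
    unfolding inv_def
  proof (intro exI[of _ "d @ [v]"] conjI)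
    show "?V = (d @ [v]) @ q @ ns" using vd by simp
    show "distinct ?V" by fact
    show "?V \<noteq> []" using ne by simp
    show "hd ?V = s" using ne hs by simp
    show "\<forall>v\<in>set (d @ [v]). \<forall>u. E v u \<longrightarrow> u \<in> set ?V" using cl ns by auto
    show "\<forall>w\<in>set ?V. w \<noteq> s \<longrightarrow> (\<exists>z\<in>set ?V. E w z) \<and> par E ?V w \<in> set (d @ [v]) \<and>
          idx ?V (par E ?V w) < idx ?V w"
    proof (intro ballI impI)
      fix w assume w: "w \<in> set ?V" "w \<noteq> s"
      show "(\<exists>z\<in>set ?V. E w z) \<and> par E ?V w \<in> set (d @ [v]) \<and> idx ?V (par E ?V w) < idx ?V w"
      proof (cases "w \<in> set vis")
        case True
        have "par E vis w \<in> set d" "idx vis (par E vis w) < idx vis w" "\<exists>z\<in>set vis. E w z"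
          using pa w True by auto
        moreover have "par E vis w \<in> set vis" using vd calculation(1) by simp
        ultimately show ?thesis using old_par[OF True w(2)] old_idx[OF True] old_idx by auto
      next
        case False
        then have wn: "w \<in> set ns" using w by auto
        have "E w v" using wn ns sym by auto
        moreover have "v \<in> set vis" using vd by simp
        ultimately show ?thesis using new_par[OF wn] newlater[of v w] wn by auto
      qed
    qed
    show "\<forall>x\<in>set ?V. \<forall>y\<in>set ?V. x \<noteq> s \<longrightarrow> y \<noteq> s \<longrightarrow> idx ?V x < idx ?V y \<longrightarrow>
          idx ?V (par E ?V x) \<le> idx ?V (par E ?V y)"
    proof (intro ballI impI)
      fix x y assume x: "x \<in> set ?V" and y: "y \<in> set ?V" and xs: "x \<noteq> s" and ys: "y \<noteq> s"
        and lt: "idx ?V x < idx ?V y"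
      show "idx ?V (par E ?V x) \<le> idx ?V (par E ?V y)"
      proof (cases "x \<in> set vis")
        case xo: True
        have px: "par E vis x \<in> set d" "par E vis x \<in> set vis" using pa xo xs vd by auto
        show ?thesis
        proof (cases "y \<in> set vis")
          case True
          have "idx vis (par E vis y) \<in> UNIV" by simp
          have pyv: "par E vis y \<in> set vis" using pa True ys vd by auto
          show ?thesis using mo xo True xs ys lt old_idx old_par px pyv by metis
        next
          case False
          then have yn: "y \<in> set ns" using y by auto
          have "idx vis (par E vis x) < idx vis v" using idxv px by blast
          then show ?thesis using new_par[OF yn] old_par[OF xo xs] old_idx px vd
            by (metis Un_iff le_less list.set_intros(1) set_append)
        qed
      next
        case False
        then have xn: "x \<in> set ns" using x by auto
        show ?thesis
        proof (cases "y \<in> set vis")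
          case True
          then show ?thesis using newlater[OF True xn] lt by simp
        next
          case False
          then have "y \<in> set ns" using y by auto
          then show ?thesis using new_par xn by simp
        qed
      qed
    qed
  qed
  moreover have "\<forall>w\<in>set vis. w \<noteq> s \<longrightarrow> par E vis w \<in> set d" using pa by blast
  ultimately show ?thesis using new_par vd by blast
qed

lemma bfs_inv:
  assumes "bfs_reach E s vis q" and sym: "\<And>a b. E a b \<Longrightarrow> E b a"
  shows "inv E s vis q"
  using assms(1)
proof (induction rule: bfs_reach.induct)
  case start
  show ?case by (fact inv_start)
next
  case (step vis v q ns)
  have "inv E s (vis @ ns) (q @ ns) \<and> (\<forall>w\<in>set ns. par E (vis @ ns) w = v)
     \<and> (\<exists>d. vis = d @ v # q \<and> (\<forall>w\<in>set vis. w \<noteq> s \<longrightarrow> par E vis w \<in> set d))"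
    by (rule inv_step[OF step.IH step.hyps(2) step.hyps(3) sym])
  then show ?case by (rule conjunct1)
qed

lemma bfsp_to_bfs:
  assumes "bfsp_reach E \<rho> vis q" "distinct \<rho>" "\<And>u v. E u v \<Longrightarrow> v \<in> set \<rho>"
  shows "bfs_reach E (hd \<rho>) vis q"
  using assms(1)
proof (induction rule: bfsp_reach.induct)
  case start
  then show ?case by (rule bfs_reach.start)
next
  case (step vis v q)
  show ?case
    by (rule bfs_reach.step[OF step.IH]) (use assms(2,3) in auto)
qed

definition sibord :: "('a \<Rightarrow> 'a \<Rightarrow> bool) \<Rightarrow> 'a list \<Rightarrow> 'a list \<Rightarrow> bool" where
  "sibord E \<rho> vis \<longleftrightarrow> (\<forall>x\<in>set vis. \<forall>y\<in>set vis. x \<noteq> hd \<rho> \<longrightarrow> y \<noteq> hd \<rho> \<longrightarrow>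
     idx vis x < idx vis y \<longrightarrow> par E vis x = par E vis y \<longrightarrow> idx \<rho> x < idx \<rho> y)"

lemma bfsp_sib:
  assumes "bfsp_reach E \<rho> vis q" "distinct \<rho>" "\<And>u v. E u v \<Longrightarrow> v \<in> set \<rho>"
    and sym: "\<And>a b. E a b \<Longrightarrow> E b a"
  shows "sibord E \<rho> vis"
  using assms(1)
proof (induction rule: bfsp_reach.induct)
  case start
  then show ?case unfolding sibord_def by auto
next
  case (step vis v q)
  let ?s = "hd \<rho>"
  let ?ns = "filter (\<lambda>u. E v u \<and> u \<notin> set vis) \<rho>"
  let ?V = "vis @ ?ns"
  have I: "inv E ?s vis (v # q)"
    by (rule bfs_inv[OF bfsp_to_bfs[OF step.hyps assms(2,3)] sym])
  have nsset: "set ?ns = {u. E v u \<and> u \<notin> set vis}" using assms(3) by (auto simp: set_filter)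
  have dn: "distinct ?ns" using assms(2) by simp
  obtain d where vd: "vis = d @ v # q" and pd: "\<forall>w\<in>set vis. w \<noteq> ?s \<longrightarrow> par E vis w \<in> set d"
    and np: "\<forall>w\<in>set ?ns. par E ?V w = v"
    using inv_step[OF I dn nsset sym] by blast
  have dv: "distinct vis" using I unfolding inv_def by blast
  have ex: "\<forall>w\<in>set vis. w \<noteq> ?s \<longrightarrow> (\<exists>z\<in>set vis. E w z)"
    using I unfolding inv_def by blast
  have vnd: "v \<notin> set d" using dv vd by auto
  have old_par: "par E ?V w = par E vis w" if wh: "w \<in> set vis" "w \<noteq> ?s" for w
  proof -
    obtain z where "z \<in> set vis" "E w z" using ex wh by blast
    then show ?thesis by (rule hd_filter_append)
  qed
  show ?case unfolding sibord_def
  proof (intro ballI impI)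
    fix x y assume x: "x \<in> set ?V" and y: "y \<in> set ?V" and xs: "x \<noteq> ?s" and ys: "y \<noteq> ?s"
      and lt: "idx ?V x < idx ?V y" and eq: "par E ?V x = par E ?V y"
    show "idx \<rho> x < idx \<rho> y"
    proof (cases "x \<in> set vis")
      case xo: True
      show ?thesis
      proof (cases "y \<in> set vis")
        case True
        have "idx vis x < idx vis y" using lt idx_append1[OF xo] idx_append1[OF True] by simp
        moreover have "par E vis x = par E vis y" using eq old_par[OF xo xs] old_par[OF True ys] by simp
        ultimately show ?thesis using step.IH[unfolded sibord_def, rule_format, OF xo True xs ys] by blast
      next
        case False
        then have "y \<in> set ?ns" using y by auto
        then have "par E ?V y = v" using np by blast
        moreover have "par E ?V x \<in> set d" using old_par[OF xo xs] pd xo xs by auto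
        ultimately show ?thesis using eq vnd by simp
      qed
    next
      case False
      then have xn: "x \<in> set ?ns" using x by auto
      show ?thesis
      proof (cases "y \<in> set vis")
        case True
        then have "idx ?V y < length vis" using idx_append1[OF True, of ?ns] idx_lt[OF True] by simp
        moreover have "idx ?V x \<ge> length vis" using idx_append2[OF False, of ?ns] by simp
        ultimately show ?thesis using lt by simp
      next
        case yF: False
        then have yn: "y \<in> set ?ns" using y by auto
        have "idx ?ns x < idx ?ns y" using lt idx_append2[OF False] idx_append2[OF yF] by simp
        then show ?thesis by (rule idx_filter_mono[OF xn yn])
      qed
    qed
  qed
qed

definition bprops :: "'a set \<Rightarrow> ('a \<Rightarrow> 'a \<Rightarrow> bool) \<Rightarrow> 'a \<Rightarrow> 'a list \<Rightarrow> bool" where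
  "bprops V E s L \<longleftrightarrow> distinct L \<and> set L = V \<and> hd L = s \<and>
    (\<forall>w\<in>V. w \<noteq> s \<longrightarrow> (\<exists>z\<in>V. E w z) \<and> idx L (par E L w) < idx L w) \<and>
    (\<forall>x\<in>V. \<forall>y\<in>V. x \<noteq> s \<longrightarrow> y \<noteq> s \<longrightarrow> idx L x < idx L y \<longrightarrow>
          idx L (par E L x) \<le> idx L (par E L y))"

lemma bfs_bprops:
  assumes "bfs_reach E s L []" "connected_graph V E" "s \<in> V"
  shows "bprops V E s L"
proof -
  have sg: "simple_graph V E" using assms(2) unfolding connected_graph_def by simp
  then have sym: "\<And>a b. E a b \<Longrightarrow> E b a" and inV: "\<And>a b. E a b \<Longrightarrow> a \<in> V \<and> b \<in> V"
    unfolding simple_graph_def by blast+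
  have I: "inv E s L []" using bfs_inv[OF assms(1) sym] .
  then have dL: "distinct L" and ne: "L \<noteq> []" and hL: "hd L = s"
    and cl: "\<forall>v\<in>set L. \<forall>u. E v u \<longrightarrow> u \<in> set L"
    and pa: "\<forall>w\<in>set L. w \<noteq> s \<longrightarrow> (\<exists>z\<in>set L. E w z) \<and> idx L (par E L w) < idx L w"
    and mo: "\<forall>x\<in>set L. \<forall>y\<in>set L. x \<noteq> s \<longrightarrow> y \<noteq> s \<longrightarrow> idx L x < idx L y \<longrightarrow>
          idx L (par E L x) \<le> idx L (par E L y)"
    unfolding inv_def by auto
  have sL: "s \<in> set L" using ne hL by (metis list.set_sel(1))
  have sub1: "set L \<subseteq> V"
  proof
    fix w assume "w \<in> set L"
    then show "w \<in> V" using pa assms(3) inV by (cases "w = s") auto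
  qed
  have sub2: "V \<subseteq> set L"
  proof
    fix u assume "u \<in> V"
    then have "E\<^sup>*\<^sup>* s u" using assms(2,3) unfolding connected_graph_def by blast
    then show "u \<in> set L"
      by (induction rule: rtranclp_induct) (use sL cl in auto)
  qed
  have sV: "set L = V" using sub1 sub2 by blast
  have pa': "\<forall>w\<in>set L. w \<noteq> s \<longrightarrow> (\<exists>z\<in>set L. E w z) \<and> idx L (par E L w) < idx L w"
    by (rule pa)
  show ?thesis unfolding bprops_def sV[symmetric] using dL hL pa' mo by (intro conjI) auto
qed

lemma bprops_par:
  assumes "bprops V E s L" "w \<in> V" "w \<noteq> s"
  shows "par E L w \<in> V \<and> E w (par E L w) \<and> (\<forall>z\<in>V. E w z \<longrightarrow> idx L (par E L w) \<le> idx L z)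
     \<and> idx L (par E L w) < idx L w"
proof -
  have sL: "set L = V" and ex: "\<exists>z\<in>V. E w z" and lt: "idx L (par E L w) < idx L w"
    using assms unfolding bprops_def by auto
  obtain z where z: "z \<in> set L" "E w z" using ex sL by blast
  have "par E L w \<in> set L \<and> E w (par E L w)" using hd_filter_props[of z L "E w"] z by blast
  moreover have "\<forall>z\<in>V. E w z \<longrightarrow> idx L (par E L w) \<le> idx L z"
    using hd_filter_min sL by metis
  ultimately show ?thesis using sL lt by simp
qed

lemma bprops_inj:
  assumes "bprops V E s L" "x \<in> V" "y \<in> V" "idx L x = idx L y"
  shows "x = y"
  using assms idx_inj unfolding bprops_def by metis

lemma bprops_s:
  assumes "bprops V E s L" "s \<in> V"
  shows "idx L s = 0"
proof -
  have "set L = V" "hd L = s" using assms(1) unfolding bprops_def by auto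
  then show ?thesis using assms(2) by (cases L) auto
qed

lemma take_filter_closed:
  "u \<in> set (take k (filter P L)) \<Longrightarrow> y \<in> set L \<Longrightarrow> P y \<Longrightarrow> idx L y < idx L u
   \<Longrightarrow> y \<in> set (take k (filter P L))"
proof (induction L arbitrary: k)
  case Nil
  then show ?case by simp
next
  case (Cons a L)
  show ?case
  proof (cases k)
    case 0
    then show ?thesis using Cons.prems by simp
  next
    case (Suc k')
    have ua: "u \<noteq> a" using Cons.prems(4) by auto
    show ?thesis
    proof (cases "y = a")
      case True
      then show ?thesis using Cons.prems Suc by simp
    next
      case False
      then have yL: "y \<in> set L" and lt: "idx L y < idx L u" using Cons.prems ua by auto
      show ?thesis
      proof (cases "P a")
        case True
        then have "u \<in> set (take k' (filter P L))" using Cons.prems(1) Suc ua by simp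
        then have "y \<in> set (take k' (filter P L))" using Cons.IH yL Cons.prems(3) lt by blast
        then show ?thesis using True Suc by simp
      next
        case False
        then have "u \<in> set (take k (filter P L))" using Cons.prems(1) by simp
        then have "y \<in> set (take k (filter P L))" using Cons.IH yL Cons.prems(3) lt by blast
        then show ?thesis using False by simp
      qed
    qed
  qed
qed

lemma key:
  assumes bs: "bprops V E s \<sigma>" and bt: "bprops V E s \<tau>" and sV: "s \<in> V"
    and sib: "sibord E \<rho> \<tau>" and h\<rho>: "hd \<rho> = s"
    and S\<rho>: "\<rho> = S @ R" and r\<rho>: "set \<rho> = V"
    and Ssub: "set S \<subseteq> V"
    and Sord: "\<forall>a\<in>set S. \<forall>b\<in>set S. idx S a < idx S b \<longrightarrow> idx \<sigma> a < idx \<sigma> b"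
    and Scl: "\<forall>u\<in>set S. \<forall>w\<in>V. w \<noteq> s \<longrightarrow> idx \<sigma> (par E \<sigma> w) < idx \<sigma> u \<longrightarrow> par E \<sigma> w \<in> set S"
  shows "\<forall>u\<in>set S. \<forall>w\<in>V. w \<noteq> s \<longrightarrow> (par E \<sigma> w = u \<longleftrightarrow> par E \<tau> w = u)"
proof -
  define K where "K u \<longleftrightarrow> (\<forall>y\<in>V. idx \<tau> y < idx \<tau> u \<longrightarrow> idx \<sigma> y < idx \<sigma> u)" for u
  have moS: "\<forall>x\<in>V. \<forall>y\<in>V. x \<noteq> s \<longrightarrow> y \<noteq> s \<longrightarrow> idx \<sigma> x < idx \<sigma> y \<longrightarrow>
          idx \<sigma> (par E \<sigma> x) \<le> idx \<sigma> (par E \<sigma> y)" using bs unfolding bprops_def by blast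
  have moT: "\<forall>x\<in>V. \<forall>y\<in>V. x \<noteq> s \<longrightarrow> y \<noteq> s \<longrightarrow> idx \<tau> x < idx \<tau> y \<longrightarrow>
          idx \<tau> (par E \<tau> x) \<le> idx \<tau> (par E \<tau> y)" using bt unfolding bprops_def by blast
  have setT: "set \<tau> = V" using bt unfolding bprops_def by blast
  have P1: "par E \<tau> w = u" if u: "u \<in> V" "K u" and w: "w \<in> V" "w \<noteq> s" "par E \<sigma> w = u" for u w
  proof (rule ccontr)
    assume ne: "par E \<tau> w \<noteq> u"
    have ps: "E w u" "\<forall>z\<in>V. E w z \<longrightarrow> idx \<sigma> u \<le> idx \<sigma> z" using bprops_par[OF bs w(1,2)] w(3) by auto
    have pt: "par E \<tau> w \<in> V" "E w (par E \<tau> w)" "idx \<tau> (par E \<tau> w) \<le> idx \<tau> u"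
      using bprops_par[OF bt w(1,2)] ps u by auto
    have "idx \<tau> (par E \<tau> w) \<noteq> idx \<tau> u" using bprops_inj[OF bt pt(1) u(1)] ne by blast
    then have "idx \<tau> (par E \<tau> w) < idx \<tau> u" using pt(3) by simp
    then have "idx \<sigma> (par E \<tau> w) < idx \<sigma> u" using u(2) pt(1) unfolding K_def by blast
    then show False using ps(2) pt(1,2) by fastforce
  qed
  have P2: "par E \<sigma> w = u" if u: "u \<in> set S" and IH: "\<forall>u'\<in>set S. idx \<sigma> u' < idx \<sigma> u \<longrightarrow> K u'"
     and w: "w \<in> V" "w \<noteq> s" "par E \<tau> w = u" for u w
  proof (rule ccontr)
    assume ne: "par E \<sigma> w \<noteq> u"
    have uV: "u \<in> V" using u Ssub by blast
    have pt: "E w u" "\<forall>z\<in>V. E w z \<longrightarrow> idx \<tau> u \<le> idx \<tau> z" using bprops_par[OF bt w(1,2)] w(3) by auto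
    have ps: "par E \<sigma> w \<in> V" "E w (par E \<sigma> w)" "idx \<sigma> (par E \<sigma> w) \<le> idx \<sigma> u"
      using bprops_par[OF bs w(1,2)] pt uV by auto
    have "idx \<sigma> (par E \<sigma> w) \<noteq> idx \<sigma> u" using bprops_inj[OF bs ps(1) uV] ne by blast
    then have lt: "idx \<sigma> (par E \<sigma> w) < idx \<sigma> u" using ps(3) by simp
    then have pS: "par E \<sigma> w \<in> set S" using Scl u w by blast
    have K': "K (par E \<sigma> w)" using IH pS lt by blast
    have "idx \<tau> u \<le> idx \<tau> (par E \<sigma> w)" using pt(2) ps by blast
    moreover have "idx \<tau> u \<noteq> idx \<tau> (par E \<sigma> w)" using bprops_inj[OF bt ps(1) uV] ne by metis
    ultimately have "idx \<tau> u < idx \<tau> (par E \<sigma> w)" by simp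
    then have "idx \<sigma> u < idx \<sigma> (par E \<sigma> w)" using K' uV unfolding K_def by blast
    then show False using lt by simp
  qed
  have Kall: "\<forall>u\<in>set S. idx \<sigma> u = n \<longrightarrow> K u" for n
  proof (induction n rule: less_induct)
    case (less n)
    show ?case
    proof (intro ballI impI)
      fix u assume uS: "u \<in> set S" and un: "idx \<sigma> u = n"
      have IH: "\<forall>u'\<in>set S. idx \<sigma> u' < idx \<sigma> u \<longrightarrow> K u'" using less un by blast
      have uV: "u \<in> V" using uS Ssub by blast
      show "K u"
      proof (cases "u = s")
        case True
        then show ?thesis unfolding K_def using bprops_s[OF bt sV] by simp
      next
        case us: False
        define u' where "u' = par E \<sigma> u"
        have pu: "u' \<in> V" "idx \<sigma> u' < idx \<sigma> u" using bprops_par[OF bs uV us] u'_def by auto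
        have u'S: "u' \<in> set S" using Scl uS uV us pu(2) u'_def by blast
        have Ku': "K u'" using IH u'S pu(2) by blast
        have qu: "par E \<tau> u = u'" using P1[OF pu(1) Ku' uV us] u'_def by simp
        show ?thesis unfolding K_def
        proof (intro ballI impI)
          fix y assume yV: "y \<in> V" and yt: "idx \<tau> y < idx \<tau> u"
          show "idx \<sigma> y < idx \<sigma> u"
          proof (cases "y = s")
            case True
            have "idx \<sigma> u \<noteq> 0" using bprops_s[OF bs sV] bprops_inj[OF bs uV sV] us by metis
            then show ?thesis using True bprops_s[OF bs sV] by simp
          next
            case ys: False
            have yu: "y \<noteq> u" using yt by blast
            have qy: "par E \<tau> y \<in> V" "E y (par E \<tau> y)" using bprops_par[OF bt yV ys] by auto
            have le: "idx \<tau> (par E \<tau> y) \<le> idx \<tau> u'" using moT yV uV ys us yt qu by metis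
            show ?thesis
            proof (cases "par E \<tau> y = u'")
              case True
              have "idx \<rho> y < idx \<rho> u"
                using sib[unfolded sibord_def, rule_format, of y u] setT yV uV ys us h\<rho> yt True qu by simp
              moreover have uS': "idx \<rho> u = idx S u" "idx S u < length S"
                using S\<rho> uS idx_append1 idx_lt by metis+
              ultimately have "idx (S @ R) y < length S" using S\<rho> by simp
              moreover have "y \<in> set (S @ R)" using S\<rho> r\<rho> yV by simp
              ultimately have yS: "y \<in> set S" by (rule idx_in_prefix[rotated])
              have "idx S y < idx S u" using \<open>idx \<rho> y < idx \<rho> u\<close> uS' S\<rho> yS idx_append1 by metis
              then show ?thesis using Sord yS uS by blast
            next
              case False
              have "idx \<tau> (par E \<tau> y) \<noteq> idx \<tau> u'" using bprops_inj[OF bt qy(1) pu(1)] False by blast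
              then have "idx \<tau> (par E \<tau> y) < idx \<tau> u'" using le by simp
              then have a: "idx \<sigma> (par E \<tau> y) < idx \<sigma> u'" using Ku' qy(1) unfolding K_def by blast
              have "idx \<sigma> (par E \<sigma> y) \<le> idx \<sigma> (par E \<tau> y)" using bprops_par[OF bs yV ys] qy by blast
              then have b: "idx \<sigma> (par E \<sigma> y) < idx \<sigma> (par E \<sigma> u)" using a u'_def by simp
              show ?thesis
              proof (rule ccontr)
                assume "\<not> idx \<sigma> y < idx \<sigma> u"
                moreover have "idx \<sigma> y \<noteq> idx \<sigma> u" using bprops_inj[OF bs yV uV] yu by blast
                ultimately have "idx \<sigma> u < idx \<sigma> y" by simp
                then have "idx \<sigma> (par E \<sigma> u) \<le> idx \<sigma> (par E \<sigma> y)" using moS uV yV us ys by blast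
                then show False using b by simp
              qed
            qed
          qed
        qed
      qed
    qed
  qed
  have KS: "\<forall>u\<in>set S. K u" using Kall by blast
  show ?thesis
  proof (intro ballI impI)
    fix u w assume uS: "u \<in> set S" and wV: "w \<in> V" and ws: "w \<noteq> s"
    have uV: "u \<in> V" using uS Ssub by blast
    show "par E \<sigma> w = u \<longleftrightarrow> par E \<tau> w = u"
      using P1[OF uV _ wV ws] P2[OF uS _ wV ws] KS uS by blast
  qed
qed

theorem lemma4p6:
  fixes V :: "'a set" and E :: "'a \<Rightarrow> 'a \<Rightarrow> bool"
    and \<sigma> \<rho> \<tau> :: "'a list" and k :: nat
  assumes "connected_graph V E"
    and "bfs_ordering V E \<sigma>"
    and "linear_ordering V \<rho>"
    and "prefix (first_internal E \<sigma> k) \<rho>"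
    and "bfs_plus_ordering E \<rho> \<tau>"
  shows "\<forall>v \<in> set (first_internal E \<sigma> k). ftree_children E \<sigma> v = ftree_children E \<tau> v"
proof (cases "first_internal E \<sigma> k = []")
  case True
  then show ?thesis by simp
next
  case Sne: False
  define S where "S = first_internal E \<sigma> k"
  define F where "F = filter (ftree_internal E \<sigma>) \<sigma>"
  have SF: "S = take k F" unfolding S_def F_def first_internal_def by simp
  have sg: "simple_graph V E" using assms(1) unfolding connected_graph_def by simp
  then have sym: "\<And>a b. E a b \<Longrightarrow> E b a" and inV: "\<And>a b. E a b \<Longrightarrow> a \<in> V \<and> b \<in> V"
    unfolding simple_graph_def by blast+
  obtain s where sV: "s \<in> V" and bs0: "bfs_reach E s \<sigma> []"
    using assms(2) unfolding bfs_ordering_def by blast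
  have bs: "bprops V E s \<sigma>" by (rule bfs_bprops[OF bs0 assms(1) sV])
  have dS: "distinct \<sigma>" "set \<sigma> = V" "hd \<sigma> = s" using bs unfolding bprops_def by auto
  obtain \<sigma>' where \<sigma>eq: "\<sigma> = s # \<sigma>'" using dS sV by (cases \<sigma>) auto
  have "ftree_internal E \<sigma> s" unfolding ftree_internal_def using \<sigma>eq by simp
  then have "F = s # filter (ftree_internal E \<sigma>) \<sigma>'" unfolding F_def using \<sigma>eq by simp
  moreover have "k \<noteq> 0" using Sne unfolding first_internal_def by (cases k) auto
  ultimately obtain S' where SS: "S = s # S'" using SF by (cases k) auto
  obtain R where \<rho>eq: "\<rho> = S @ R" using assms(4) unfolding S_def by (auto elim: prefixE)
  have h\<rho>: "hd \<rho> = s" using \<rho>eq SS by simp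
  have d\<rho>: "distinct \<rho>" and s\<rho>: "set \<rho> = V" using assms(3) unfolding linear_ordering_def by auto
  have cl\<rho>: "\<And>u v. E u v \<Longrightarrow> v \<in> set \<rho>" using inV s\<rho> by blast
  have bt0: "bfsp_reach E \<rho> \<tau> []" using assms(5) unfolding bfs_plus_ordering_def .
  have bt: "bprops V E s \<tau>"
    using bfs_bprops[OF bfsp_to_bfs[OF bt0 d\<rho> cl\<rho>] assms(1)] h\<rho> sV by simp
  have sib: "sibord E \<rho> \<tau>" by (rule bfsp_sib[OF bt0 d\<rho> cl\<rho> sym])
  have dT: "set \<tau> = V" "hd \<tau> = s" using bt unfolding bprops_def by auto
  have Ssub: "set S \<subseteq> V" using SF dS unfolding F_def by (auto dest: in_set_takeD)
  have Sord: "\<forall>a\<in>set S. \<forall>b\<in>set S. idx S a < idx S b \<longrightarrow> idx \<sigma> a < idx \<sigma> b"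
  proof (intro ballI impI)
    fix a b assume a: "a \<in> set S" and b: "b \<in> set S" and lt: "idx S a < idx S b"
    have "idx F a < idx F b" using lt idx_take a b SF by metis
    moreover have "a \<in> set F" "b \<in> set F" using a b SF by (auto dest: in_set_takeD)
    ultimately show "idx \<sigma> a < idx \<sigma> b" using idx_filter_mono unfolding F_def by metis
  qed
  have Scl: "\<forall>u\<in>set S. \<forall>w\<in>V. w \<noteq> s \<longrightarrow> idx \<sigma> (par E \<sigma> w) < idx \<sigma> u \<longrightarrow> par E \<sigma> w \<in> set S"
  proof (intro ballI impI)
    fix u w assume uS: "u \<in> set S" and wV: "w \<in> V" and ws: "w \<noteq> s"
      and lt: "idx \<sigma> (par E \<sigma> w) < idx \<sigma> u"
    have pV: "par E \<sigma> w \<in> V" using bprops_par[OF bs wV ws] by blast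
    have "w \<in> ftree_children E \<sigma> (par E \<sigma> w)"
      unfolding ftree_children_def ftree_parent_def using wV ws dS by simp
    then have "ftree_internal E \<sigma> (par E \<sigma> w)" unfolding ftree_internal_def using pV dS by blast
    then show "par E \<sigma> w \<in> set S"
      using take_filter_closed[of u k "ftree_internal E \<sigma>" \<sigma> "par E \<sigma> w"] uS SF pV dS lt
      unfolding F_def by simp
  qed
  have K: "\<forall>u\<in>set S. \<forall>w\<in>V. w \<noteq> s \<longrightarrow> (par E \<sigma> w = u \<longleftrightarrow> par E \<tau> w = u)"
    by (rule key[OF bs bt sV sib h\<rho> \<rho>eq s\<rho> Ssub Sord Scl])
  show ?thesis
  proof
    fix v assume "v \<in> set (first_internal E \<sigma> k)"
    then have vS: "v \<in> set S" unfolding S_def .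
    show "ftree_children E \<sigma> v = ftree_children E \<tau> v"
      unfolding ftree_children_def ftree_parent_def using K vS dS dT by auto
  qed
qed

end
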